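(* Let $D_+\to\mathcal E\xrightarrow{q}\mathcal C$ be a linear extension of a small category $\mathcal C$ by a natural system $D$, and let $(\mathcal C,S)$ be a quasi-schemoid. Assume that for every morphism $f$ of $\mathcal C$ the homomorphisms $f_*$ and $f^*$ are invertible, and that $D_{1_{s(f)}}\cong D_{1_{s(g)}}$ whenever $f,g$ lie in a common block $\sigma\in S$. Then $\mathcal E$ admits a unique quasi-schemoid structure $\widetilde S$ such that $q:(\mathcal E,\widetilde S)\to(\mathcal C,S)$ is a morphism of quasi-schemoids and the induced map $\widetilde S\to S$ (sending a block to the block containing its image) is injective; namely $\widetilde S=\{q^{-1}(\sigma)\}_{\sigma\in S}$.
   Context: Write $s(f),t(f)$ for source and target. A quasi-schemoid is a pair $(\mathcal C,S)$ with $\mathcal C$ a small category and $S$ a partition of $mor(\mathcal C)$ into nonempty blocks such that for all $\sigma,\tau,\mu\in S$ and $f,g\in\mu$ the sets $\{(a,b)\in\sigma\times\tau: s(a)=t(b), a\circ b=f\}$ and the analogous set for $g$ have equal cardinality. A morphism of quasi-schemoids is a functor mapping each block into some block. The category of factorizations $F(\mathcal C)$ has objects the morphisms of $\mathcal C$ and morphisms $f\to g$ the pairs $(\alpha,\beta)$ with $g=\alpha f\beta$, composition $(\alpha',\beta')(\alpha,\beta)=(\alpha'\alpha,\beta\beta')$. A natural system is a functor $D:F(\mathcal C)\to\mathbb K\text{-Mod}$, $f\mapsto D_f$; for composable $f,g$ put $f_*=D(f,1):D_g\to D_{fg}$ and $g^*=D(1,g):D_f\to D_{fg}$. A linear extension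 $D_+\to\mathcal E\xrightarrow{q}\mathcal C$ (Baues–Wirsching) consists of a category $\mathcal E$ with the same objects and a full functor $q$ that is the identity on objects, such that for each morphism $f$ of $\mathcal C$ the abelian group $D_f$ acts transitively and freely on $q^{-1}(f)$ (written $f_0+\alpha$), and $(f_0+\alpha)(g_0+\beta)=f_0g_0+f_*\beta+g^*\alpha$. *)

theory Defs
  imports "HOL-Algebra.Module" "HOL-Library.Disjoint_Sets" "HOL-Library.Equipollence"
begin

record ('o, 'm) cat =
  Obj  :: "'o set"
  Mor  :: "'m set"
  Dom  :: "'m \<Rightarrow> 'o"
  Cod  :: "'m \<Rightarrow> 'o"
  Id   :: "'o \<Rightarrow> 'm"
  Comp :: "'m \<Rightarrow> 'm \<Rightarrow> 'm"

definition is_category :: "('o, 'm) cat \<Rightarrow> bool" where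
  "is_category C \<longleftrightarrow>
     (\<forall>f\<in>Mor C. Dom C f \<in> Obj C \<and> Cod C f \<in> Obj C) \<and>
     (\<forall>x\<in>Obj C. Id C x \<in> Mor C \<and> Dom C (Id C x) = x \<and> Cod C (Id C x) = x) \<and>
     (\<forall>f\<in>Mor C. \<forall>g\<in>Mor C. Dom C g = Cod C f \<longrightarrow>
        Comp C g f \<in> Mor C \<and> Dom C (Comp C g f) = Dom C f \<and> Cod C (Comp C g f) = Cod C g) \<and>
     (\<forall>f\<in>Mor C. \<forall>g\<in>Mor C. \<forall>h\<in>Mor C. Dom C h = Cod C g \<longrightarrow> Dom C g = Cod C f \<longrightarrow>
        Comp C h (Comp C g f) = Comp C (Comp C h g) f) \<and>
     (\<forall>f\<in>Mor C. Comp C (Id C (Cod C f)) f = f \<and> Comp C f (Id C (Dom C f)) = f)"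

definition factor_pairs :: "('o, 'm) cat \<Rightarrow> 'm set \<Rightarrow> 'm set \<Rightarrow> 'm \<Rightarrow> ('m \<times> 'm) set" where
  "factor_pairs C \<sigma> \<tau> f = {(a, b). a \<in> \<sigma> \<and> b \<in> \<tau> \<and> Dom C a = Cod C b \<and> Comp C a b = f}"

definition quasi_schemoid :: "('o, 'm) cat \<Rightarrow> 'm set set \<Rightarrow> bool" where
  "quasi_schemoid C S \<longleftrightarrow> is_category C \<and> partition_on (Mor C) S \<and>
     (\<forall>\<sigma>\<in>S. \<forall>\<tau>\<in>S. \<forall>\<mu>\<in>S. \<forall>f\<in>\<mu>. \<forall>g\<in>\<mu>.
        factor_pairs C \<sigma> \<tau> f \<approx> factor_pairs C \<sigma> \<tau> g)"

definition id_on_obj_functor :: "('o, 'e) cat \<Rightarrow> ('o, 'm) cat \<Rightarrow> ('e \<Rightarrow> 'm) \<Rightarrow> bool" where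
  "id_on_obj_functor E C F \<longleftrightarrow> Obj E = Obj C \<and>
     (\<forall>e\<in>Mor E. F e \<in> Mor C \<and> Dom C (F e) = Dom E e \<and> Cod C (F e) = Cod E e) \<and>
     (\<forall>x\<in>Obj E. F (Id E x) = Id C x) \<and>
     (\<forall>e\<in>Mor E. \<forall>e'\<in>Mor E. Dom E e = Cod E e' \<longrightarrow> F (Comp E e e') = Comp C (F e) (F e'))"

definition full_functor :: "('o, 'e) cat \<Rightarrow> ('o, 'm) cat \<Rightarrow> ('e \<Rightarrow> 'm) \<Rightarrow> bool" where
  "full_functor E C F \<longleftrightarrow> (\<forall>f\<in>Mor C. \<exists>e\<in>Mor E. Dom E e = Dom C f \<and> Cod E e = Cod C f \<and> F e = f)"

definition qs_morphism ::
  "('o, 'e) cat \<Rightarrow> 'e set set \<Rightarrow> ('o, 'm) cat \<Rightarrow> 'm set set \<Rightarrow> ('e \<Rightarrow> 'm) \<Rightarrow> bool" where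
  "qs_morphism E S' C S F \<longleftrightarrow> quasi_schemoid E S' \<and> quasi_schemoid C S \<and>
     id_on_obj_functor E C F \<and> (\<forall>\<tau>\<in>S'. \<exists>\<sigma>\<in>S. F ` \<tau> \<subseteq> \<sigma>)"

definition induced_block_map :: "'m set set \<Rightarrow> ('e \<Rightarrow> 'm) \<Rightarrow> 'e set \<Rightarrow> 'm set" where
  "induced_block_map S F \<tau> = (THE \<sigma>. \<sigma> \<in> S \<and> F ` \<tau> \<subseteq> \<sigma>)"

definition module_hom :: "('k, 'c) ring_scheme \<Rightarrow> ('k, 'v, 'a) module_scheme \<Rightarrow>
     ('k, 'v, 'b) module_scheme \<Rightarrow> ('v \<Rightarrow> 'v) set" where
  "module_hom R M N = {h. (\<forall>x\<in>carrier M. h x \<in> carrier N) \<and>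
     (\<forall>x\<in>carrier M. \<forall>y\<in>carrier M. h (x \<oplus>\<^bsub>M\<^esub> y) = h x \<oplus>\<^bsub>N\<^esub> h y) \<and>
     (\<forall>a\<in>carrier R. \<forall>x\<in>carrier M. h (a \<odot>\<^bsub>M\<^esub> x) = a \<odot>\<^bsub>N\<^esub> h x)}"

definition module_iso :: "('k, 'c) ring_scheme \<Rightarrow> ('k, 'v, 'a) module_scheme \<Rightarrow>
     ('k, 'v, 'b) module_scheme \<Rightarrow> ('v \<Rightarrow> 'v) set" where
  "module_iso R M N = {h. h \<in> module_hom R M N \<and> bij_betw h (carrier M) (carrier N)}"

definition is_module_iso :: "('k, 'c) ring_scheme \<Rightarrow> ('k, 'v, 'a) module_scheme \<Rightarrow>
     ('k, 'v, 'b) module_scheme \<Rightarrow> bool" where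
  "is_module_iso R M N \<longleftrightarrow> module_iso R M N \<noteq> {}"

text \<open>A natural system on C with values in R-modules: a functor from the category of
  factorizations F(C). DM f is the module D_f; DMap a f b is D(a,b) : D_f -> D_(a f b),
  for the morphism (a,b) : f -> a o f o b of F(C).\<close>

definition natural_system :: "('o, 'm) cat \<Rightarrow> ('k, 'c) ring_scheme \<Rightarrow>
     ('m \<Rightarrow> ('k, 'v) module) \<Rightarrow> ('m \<Rightarrow> 'm \<Rightarrow> 'm \<Rightarrow> 'v \<Rightarrow> 'v) \<Rightarrow> bool" where
  "natural_system C R DM DMap \<longleftrightarrow>
     (\<forall>f\<in>Mor C. module R (DM f)) \<and>
     (\<forall>f\<in>Mor C. \<forall>a\<in>Mor C. \<forall>b\<in>Mor C. Dom C a = Cod C f \<longrightarrow> Cod C b = Dom C f \<longrightarrow>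
        DMap a f b \<in> module_hom R (DM f) (DM (Comp C (Comp C a f) b))) \<and>
     (\<forall>f\<in>Mor C. \<forall>x\<in>carrier (DM f). DMap (Id C (Cod C f)) f (Id C (Dom C f)) x = x) \<and>
     (\<forall>f\<in>Mor C. \<forall>a\<in>Mor C. \<forall>b\<in>Mor C. \<forall>a'\<in>Mor C. \<forall>b'\<in>Mor C.
        Dom C a = Cod C f \<longrightarrow> Cod C b = Dom C f \<longrightarrow> Dom C a' = Cod C a \<longrightarrow> Cod C b' = Dom C b \<longrightarrow>
        (\<forall>x\<in>carrier (DM f).
           DMap a' (Comp C (Comp C a f) b) b' (DMap a f b x) = DMap (Comp C a' a) f (Comp C b b') x))"

text \<open>f_* = D(f,1) : D_g -> D_(fg) and g^* = D(1,g) : D_f -> D_(fg).\<close>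

definition lower_star :: "('o, 'm) cat \<Rightarrow> ('m \<Rightarrow> 'm \<Rightarrow> 'm \<Rightarrow> 'v \<Rightarrow> 'v) \<Rightarrow> 'm \<Rightarrow> 'm \<Rightarrow> 'v \<Rightarrow> 'v" where
  "lower_star C DMap f g = DMap f g (Id C (Dom C g))"

definition upper_star :: "('o, 'm) cat \<Rightarrow> ('m \<Rightarrow> 'm \<Rightarrow> 'm \<Rightarrow> 'v \<Rightarrow> 'v) \<Rightarrow> 'm \<Rightarrow> 'm \<Rightarrow> 'v \<Rightarrow> 'v" where
  "upper_star C DMap g f = DMap (Id C (Cod C f)) f g"

text \<open>D_+ -> E -q-> C. act f a e is the element e + a of the fibre q^{-1}(f), for a in D_f.\<close>

definition linear_extension :: "('o, 'm) cat \<Rightarrow> ('k, 'c) ring_scheme \<Rightarrow>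
     ('m \<Rightarrow> ('k, 'v) module) \<Rightarrow> ('m \<Rightarrow> 'm \<Rightarrow> 'm \<Rightarrow> 'v \<Rightarrow> 'v) \<Rightarrow>
     ('o, 'e) cat \<Rightarrow> ('e \<Rightarrow> 'm) \<Rightarrow> ('m \<Rightarrow> 'v \<Rightarrow> 'e \<Rightarrow> 'e) \<Rightarrow> bool" where
  "linear_extension C R DM DMap E q act \<longleftrightarrow>
     is_category C \<and> is_category E \<and> natural_system C R DM DMap \<and>
     id_on_obj_functor E C q \<and> full_functor E C q \<and>
     (\<forall>f\<in>Mor C. \<forall>e\<in>Mor E. q e = f \<longrightarrow>
        (\<forall>a\<in>carrier (DM f). act f a e \<in> Mor E \<and> q (act f a e) = f) \<and>
        act f \<zero>\<^bsub>DM f\<^esub> e = e \<and>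
        (\<forall>a\<in>carrier (DM f). \<forall>b\<in>carrier (DM f). act f (a \<oplus>\<^bsub>DM f\<^esub> b) e = act f a (act f b e)) \<and>
        (\<forall>e'\<in>Mor E. q e' = f \<longrightarrow> (\<exists>!a. a \<in> carrier (DM f) \<and> act f a e = e'))) \<and>
     (\<forall>f\<in>Mor C. \<forall>g\<in>Mor C. Dom C f = Cod C g \<longrightarrow>
        (\<forall>f0\<in>Mor E. \<forall>g0\<in>Mor E. q f0 = f \<longrightarrow> q g0 = g \<longrightarrow>
          (\<forall>a\<in>carrier (DM f). \<forall>b\<in>carrier (DM g).
             Comp E (act f a f0) (act g b g0) =
             act (Comp C f g)
               (lower_star C DMap f g b \<oplus>\<^bsub>DM (Comp C f g)\<^esub> upper_star C DMap g f a)
               (Comp E f0 g0))))"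

end

theory Submission
  imports Defs
begin

lemma hom_zero:
  assumes "module R M" "module R N" "h \<in> module_hom R M N"
  shows "h \<zero>\<^bsub>M\<^esub> = \<zero>\<^bsub>N\<^esub>"
proof -
  interpret M: module R M by fact
  interpret N: module R N by fact
  have c: "h \<zero>\<^bsub>M\<^esub> \<in> carrier N" using assms(3) M.zero_closed by (simp add: module_hom_def)
  have z: "\<zero>\<^bsub>M\<^esub> \<in> carrier M" by simp
  have e1: "h (\<zero>\<^bsub>M\<^esub> \<oplus>\<^bsub>M\<^esub> \<zero>\<^bsub>M\<^esub>) = h \<zero>\<^bsub>M\<^esub> \<oplus>\<^bsub>N\<^esub> h \<zero>\<^bsub>M\<^esub>"
    using assms(3) z unfolding module_hom_def by blast
  have "h \<zero>\<^bsub>M\<^esub> \<oplus>\<^bsub>N\<^esub> h \<zero>\<^bsub>M\<^esub> = \<zero>\<^bsub>N\<^esub> \<oplus>\<^bsub>N\<^esub> h \<zero>\<^bsub>M\<^esub>" using c e1 by simp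
  thus ?thesis using c N.add.right_cancel[of "h \<zero>\<^bsub>M\<^esub>" "h \<zero>\<^bsub>M\<^esub>" "\<zero>\<^bsub>N\<^esub>"] by simp
qed

lemma part_unique: "partition_on A P \<Longrightarrow> X\<in>P \<Longrightarrow> Y\<in>P \<Longrightarrow> x\<in>X \<Longrightarrow> x\<in>Y \<Longrightarrow> X=Y"
  unfolding partition_on_def disjoint_def by blast

lemma ex1_eq: "\<exists>!x. P x \<Longrightarrow> P a \<Longrightarrow> P b \<Longrightarrow> a = b" by auto

locale LE =
  fixes C :: "('o, 'm) cat" and E :: "('o, 'e) cat"
    and R :: "('k, 'c) ring_scheme"
    and DM :: "'m \<Rightarrow> ('k, 'v) module" and DMap :: "'m \<Rightarrow> 'm \<Rightarrow> 'm \<Rightarrow> 'v \<Rightarrow> 'v"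
    and q :: "'e \<Rightarrow> 'm" and act :: "'m \<Rightarrow> 'v \<Rightarrow> 'e \<Rightarrow> 'e"
  assumes ext: "linear_extension C R DM DMap E q act"
    and lower_inv: "\<And>f g. f \<in> Mor C \<Longrightarrow> g \<in> Mor C \<Longrightarrow> Dom C f = Cod C g \<Longrightarrow>
        lower_star C DMap f g \<in> module_iso R (DM g) (DM (Comp C f g))"
    and upper_inv: "\<And>f h. f \<in> Mor C \<Longrightarrow> h \<in> Mor C \<Longrightarrow> Dom C h = Cod C f \<Longrightarrow>
        upper_star C DMap f h \<in> module_iso R (DM h) (DM (Comp C h f))"
begin

lemma catC: "is_category C" and catE: "is_category E" and nat: "natural_system C R DM DMap"
  and F: "id_on_obj_functor E C q" and full: "full_functor E C q"
  using ext unfolding linear_extension_def by blast+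

lemma modD: "f \<in> Mor C \<Longrightarrow> module R (DM f)"
  using nat unfolding natural_system_def by blast

lemma qMor: "e \<in> Mor E \<Longrightarrow> q e \<in> Mor C \<and> Dom C (q e) = Dom E e \<and> Cod C (q e) = Cod E e"
  using F unfolding id_on_obj_functor_def by blast

lemma qComp: "e \<in> Mor E \<Longrightarrow> e' \<in> Mor E \<Longrightarrow> Dom E e = Cod E e' \<Longrightarrow> q (Comp E e e') = Comp C (q e) (q e')"
  using F unfolding id_on_obj_functor_def by blast

lemma compE: "e \<in> Mor E \<Longrightarrow> e' \<in> Mor E \<Longrightarrow> Dom E e = Cod E e' \<Longrightarrow> Comp E e e' \<in> Mor E"
  using catE unfolding is_category_def by blast

lemma act_mem: "e \<in> Mor E \<Longrightarrow> a \<in> carrier (DM (q e)) \<Longrightarrow> act (q e) a e \<in> Mor E \<and> q (act (q e) a e) = q e"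
  using ext qMor unfolding linear_extension_def by blast

lemma act_zero: "e \<in> Mor E \<Longrightarrow> act (q e) \<zero>\<^bsub>DM (q e)\<^esub> e = e"
  using ext qMor unfolding linear_extension_def by blast

lemma act_ex1: "e \<in> Mor E \<Longrightarrow> e' \<in> Mor E \<Longrightarrow> q e' = q e \<Longrightarrow> \<exists>!a. a \<in> carrier (DM (q e)) \<and> act (q e) a e = e'"
  using ext qMor unfolding linear_extension_def by blast

lemma comp_act: "f0 \<in> Mor E \<Longrightarrow> g0 \<in> Mor E \<Longrightarrow> Dom E f0 = Cod E g0 \<Longrightarrow> a \<in> carrier (DM (q f0)) \<Longrightarrow>
   b \<in> carrier (DM (q g0)) \<Longrightarrow> Comp E (act (q f0) a f0) (act (q g0) b g0) =
   act (Comp C (q f0) (q g0)) (lower_star C DMap (q f0) (q g0) b \<oplus>\<^bsub>DM (Comp C (q f0) (q g0))\<^esub>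
     upper_star C DMap (q g0) (q f0) a) (Comp E f0 g0)"
proof -
  assume a: "f0 \<in> Mor E" "g0 \<in> Mor E" "Dom E f0 = Cod E g0" "a \<in> carrier (DM (q f0))" "b \<in> carrier (DM (q g0))"
  have "q f0 \<in> Mor C" "q g0 \<in> Mor C" "Dom C (q f0) = Cod C (q g0)" using a qMor by auto
  thus ?thesis using ext a unfolding linear_extension_def by blast
qed

definition lift :: "'m \<Rightarrow> 'e" where "lift x = (SOME e. e \<in> Mor E \<and> q e = x)"

lemma lift: "x \<in> Mor C \<Longrightarrow> lift x \<in> Mor E \<and> q (lift x) = x"
proof -
  assume "x \<in> Mor C"
  then have "\<exists>e. e \<in> Mor E \<and> q e = x" using full unfolding full_functor_def by blast
  thus ?thesis unfolding lift_def by (rule someI_ex)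
qed

definition coord :: "'e \<Rightarrow> 'v" where
  "coord a = (THE \<alpha>. \<alpha> \<in> carrier (DM (q a)) \<and> act (q a) \<alpha> (lift (q a)) = a)"

lemma coord: "a \<in> Mor E \<Longrightarrow> coord a \<in> carrier (DM (q a)) \<and> act (q a) (coord a) (lift (q a)) = a"
proof -
  assume a: "a \<in> Mor E"
  have l: "lift (q a) \<in> Mor E" "q (lift (q a)) = q a" using lift qMor a by auto
  have "\<exists>!\<alpha>. \<alpha> \<in> carrier (DM (q a)) \<and> act (q a) \<alpha> (lift (q a)) = a"
    using act_ex1[OF l(1) a] l(2) by simp
  thus ?thesis unfolding coord_def by (rule theI')
qed

lemma coord_act: "x \<in> Mor C \<Longrightarrow> \<alpha> \<in> carrier (DM x) \<Longrightarrow> coord (act x \<alpha> (lift x)) = \<alpha>"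
proof -
  assume x: "x \<in> Mor C" and al: "\<alpha> \<in> carrier (DM x)"
  have l: "lift x \<in> Mor E" "q (lift x) = x" using lift x by auto
  have m: "act x \<alpha> (lift x) \<in> Mor E" "q (act x \<alpha> (lift x)) = x" using act_mem[OF l(1)] l(2) al by auto
  have u: "\<exists>!\<beta>. \<beta> \<in> carrier (DM x) \<and> act x \<beta> (lift x) = act x \<alpha> (lift x)"
    using act_ex1[OF l(1) m(1)] l(2) m(2) by simp
  have c: "coord (act x \<alpha> (lift x)) \<in> carrier (DM x) \<and> act x (coord (act x \<alpha> (lift x))) (lift x) = act x \<alpha> (lift x)"
    using coord[OF m(1)] m(2) by simp
  show ?thesis using u c al by blast
qed

lemma comp_left_zero:
  assumes a: "a \<in> Mor E" and b0: "b0 \<in> Mor E" and d: "Dom E a = Cod E b0" and be: "\<beta> \<in> carrier (DM (q b0))"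
  shows "Comp E a (act (q b0) \<beta> b0) = act (Comp C (q a) (q b0)) (lower_star C DMap (q a) (q b0) \<beta>) (Comp E a b0)"
proof -
  have qa: "q a \<in> Mor C" "q b0 \<in> Mor C" "Dom C (q a) = Cod C (q b0)" using qMor a b0 d by auto
  have z: "\<zero>\<^bsub>DM (q a)\<^esub> \<in> carrier (DM (q a))" using modD[OF qa(1)] by (metis module.axioms(2) abelian_group.axioms(1) abelian_monoid.zero_closed)
  have "Comp E a (act (q b0) \<beta> b0) = Comp E (act (q a) \<zero>\<^bsub>DM (q a)\<^esub> a) (act (q b0) \<beta> b0)"
    using act_zero[OF a] by simp
  also have "\<dots> = act (Comp C (q a) (q b0)) (lower_star C DMap (q a) (q b0) \<beta> \<oplus>\<^bsub>DM (Comp C (q a) (q b0))\<^esub>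
     upper_star C DMap (q b0) (q a) \<zero>\<^bsub>DM (q a)\<^esub>) (Comp E a b0)"
    using comp_act[OF a b0 d z be] .
  also have "upper_star C DMap (q b0) (q a) \<zero>\<^bsub>DM (q a)\<^esub> = \<zero>\<^bsub>DM (Comp C (q a) (q b0))\<^esub>"
    using upper_inv[OF qa(2) qa(1) qa(3)] hom_zero modD qa catC
    unfolding module_iso_def is_category_def by blast
  also have "lower_star C DMap (q a) (q b0) \<beta> \<in> carrier (DM (Comp C (q a) (q b0)))"
    using lower_inv[OF qa] be unfolding module_iso_def module_hom_def by blast
  then have "lower_star C DMap (q a) (q b0) \<beta> \<oplus>\<^bsub>DM (Comp C (q a) (q b0))\<^esub> \<zero>\<^bsub>DM (Comp C (q a) (q b0))\<^esub>
      = lower_star C DMap (q a) (q b0) \<beta>"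
    using modD qa catC unfolding is_category_def
    by (metis module.axioms(2) abelian_group.axioms(1) abelian_monoid.r_zero)
  finally show ?thesis .
qed

lemma fibre_eqpoll:
  assumes e: "e \<in> Mor E" and st: "\<sigma> \<subseteq> Mor C" "\<tau> \<subseteq> Mor C"
  shows "factor_pairs E {e \<in> Mor E. q e \<in> \<sigma>} {e \<in> Mor E. q e \<in> \<tau>} e
          \<approx> Sigma (factor_pairs C \<sigma> \<tau> (q e)) (\<lambda>p. carrier (DM (fst p)))"
proof -
  let ?FE = "factor_pairs E {e \<in> Mor E. q e \<in> \<sigma>} {e \<in> Mor E. q e \<in> \<tau>} e"
  let ?Sig = "Sigma (factor_pairs C \<sigma> \<tau> (q e)) (\<lambda>p. carrier (DM (fst p)))"
  define \<Phi> where "\<Phi> = (\<lambda>(a::'e, b::'e). ((q a, q b), coord a))"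
  have into: "\<Phi> p \<in> ?Sig" if p: "p \<in> ?FE" for p
  proof -
    obtain a b where ab: "p = (a,b)" "a \<in> Mor E" "q a \<in> \<sigma>" "b \<in> Mor E" "q b \<in> \<tau>"
      "Dom E a = Cod E b" "Comp E a b = e"
      using p unfolding factor_pairs_def by auto
    have "(q a, q b) \<in> factor_pairs C \<sigma> \<tau> (q e)"
      using ab qMor[OF ab(2)] qMor[OF ab(4)] qComp[OF ab(2) ab(4) ab(6)]
      unfolding factor_pairs_def by auto
    thus ?thesis using coord[OF ab(2)] ab(1) unfolding \<Phi>_def by auto
  qed
  have inj: "inj_on \<Phi> ?FE"
  proof (rule inj_onI)
    fix p p' assume p: "p \<in> ?FE" and p': "p' \<in> ?FE" and eq: "\<Phi> p = \<Phi> p'"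
    obtain a b where ab: "p = (a,b)" "a \<in> Mor E" "q a \<in> \<sigma>" "b \<in> Mor E" "q b \<in> \<tau>"
      "Dom E a = Cod E b" "Comp E a b = e"
      using p unfolding factor_pairs_def by auto
    obtain a' b' where ab': "p' = (a',b')" "a' \<in> Mor E" "q a' \<in> \<sigma>" "b' \<in> Mor E" "q b' \<in> \<tau>"
      "Dom E a' = Cod E b'" "Comp E a' b' = e"
      using p' unfolding factor_pairs_def by auto
    have qq: "q a = q a'" "q b = q b'" "coord a = coord a'" using eq ab(1) ab'(1) unfolding \<Phi>_def by auto
    have "a = act (q a) (coord a) (lift (q a))" using coord[OF ab(2)] by simp
    also have "\<dots> = act (q a') (coord a') (lift (q a'))" using qq by simp
    also have "\<dots> = a'" using coord[OF ab'(2)] by simp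
    finally have aa: "a = a'" .
    let ?x = "q a" and ?y = "q b"
    have xy: "?x \<in> Mor C" "?y \<in> Mor C" "Dom C ?x = Cod C ?y" using qMor ab by auto
    have l: "lift ?y \<in> Mor E" "q (lift ?y) = ?y" using lift xy by auto
    have d: "Dom E a = Cod E (lift ?y)" using qMor[OF ab(2)] qMor[OF l(1)] l(2) xy(3) by auto
    have cb: "coord b \<in> carrier (DM ?y)" "act ?y (coord b) (lift ?y) = b" using coord[OF ab(4)] by auto
    have cb': "coord b' \<in> carrier (DM ?y)" "act ?y (coord b') (lift ?y) = b'" using coord[OF ab'(4)] qq by auto
    have e1: "e = act (Comp C ?x ?y) (lower_star C DMap ?x ?y (coord b)) (Comp E a (lift ?y))"
      using comp_left_zero[OF ab(2) l(1) d, of "coord b"] cb l(2) ab(7) by simp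
    have e2: "e = act (Comp C ?x ?y) (lower_star C DMap ?x ?y (coord b')) (Comp E a (lift ?y))"
      using comp_left_zero[OF ab(2) l(1) d, of "coord b'"] cb' l(2) ab'(7) aa by simp
    have m: "Comp E a (lift ?y) \<in> Mor E" using compE[OF ab(2) l(1) d] .
    have qm: "q (Comp E a (lift ?y)) = Comp C ?x ?y" using qComp[OF ab(2) l(1) d] l(2) by simp
    have iso: "lower_star C DMap ?x ?y \<in> module_iso R (DM ?y) (DM (Comp C ?x ?y))" using lower_inv xy by blast
    have c1: "lower_star C DMap ?x ?y (coord b) \<in> carrier (DM (Comp C ?x ?y))"
      and c2: "lower_star C DMap ?x ?y (coord b') \<in> carrier (DM (Comp C ?x ?y))"
      using iso cb cb' unfolding module_iso_def module_hom_def by blast+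
    have "\<exists>!\<delta>. \<delta> \<in> carrier (DM (Comp C ?x ?y)) \<and> act (Comp C ?x ?y) \<delta> (Comp E a (lift ?y)) = e"
      using act_ex1[OF m e] qm qComp[OF ab(2) ab(4) ab(6)] ab(7) by simp
    then have "lower_star C DMap ?x ?y (coord b) = lower_star C DMap ?x ?y (coord b')"
      by (rule ex1_eq) (intro conjI c1 c2 e1[symmetric] e2[symmetric])+
    moreover have ij: "inj_on (lower_star C DMap ?x ?y) (carrier (DM ?y))"
      using iso unfolding module_iso_def bij_betw_def by blast
    ultimately have cc: "coord b = coord b'" using inj_onD[OF ij _ cb(1) cb'(1)] by blast
    have "b = act ?y (coord b) (lift ?y)" by (rule cb(2)[symmetric])
    also have "\<dots> = act ?y (coord b') (lift ?y)" by (simp only: cc)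
    also have "\<dots> = b'" by (rule cb'(2))
    finally have "b = b'" .
    thus "p = p'" using aa ab(1) ab'(1) by simp
  qed
  have onto: "?Sig \<subseteq> \<Phi> ` ?FE"
  proof
    fix z assume z: "z \<in> ?Sig"
    obtain x y \<alpha> where xy: "z = ((x,y),\<alpha>)" "x \<in> \<sigma>" "y \<in> \<tau>" "Dom C x = Cod C y" "Comp C x y = q e"
      "\<alpha> \<in> carrier (DM x)"
      using z unfolding factor_pairs_def by auto
    have qe: "q e \<in> Mor C" using qMor e by auto
    have xyM: "x \<in> Mor C" "y \<in> Mor C" using st xy by auto
    have lx: "lift x \<in> Mor E" "q (lift x) = x" using lift xyM by auto
    have ly: "lift y \<in> Mor E" "q (lift y) = y" using lift xyM by auto
    define a where "a = act x \<alpha> (lift x)"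
    have a: "a \<in> Mor E" "q a = x" using act_mem[OF lx(1)] lx(2) xy(6) unfolding a_def by auto
    have d: "Dom E a = Cod E (lift y)" using qMor[OF a(1)] qMor[OF ly(1)] a(2) ly(2) xy(4) by auto
    have m: "Comp E a (lift y) \<in> Mor E" using compE[OF a(1) ly(1) d] .
    have qm: "q (Comp E a (lift y)) = q e" using qComp[OF a(1) ly(1) d] a(2) ly(2) xy(5) by simp
    obtain \<delta> where de: "\<delta> \<in> carrier (DM (q e))" "act (q e) \<delta> (Comp E a (lift y)) = e"
      using act_ex1[OF m e qm[symmetric]] unfolding qm by auto
    have iso: "lower_star C DMap x y \<in> module_iso R (DM y) (DM (Comp C x y))" using lower_inv xyM xy(4) by blast
    then obtain \<beta> where be: "\<beta> \<in> carrier (DM y)" "lower_star C DMap x y \<beta> = \<delta>"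
    proof -
      have "\<delta> \<in> lower_star C DMap x y ` carrier (DM y)"
        using iso de(1) xy(5) unfolding module_iso_def bij_betw_def by simp
      thus ?thesis using that by blast
    qed
    define b where "b = act y \<beta> (lift y)"
    have b: "b \<in> Mor E" "q b = y" using act_mem[OF ly(1)] ly(2) be(1) unfolding b_def by auto
    have db: "Dom E a = Cod E b" using qMor[OF a(1)] qMor[OF b(1)] a(2) b(2) xy(4) by auto
    have "Comp E a b = e"
      using comp_left_zero[OF a(1) ly(1) d, of \<beta>] be ly(2) a(2) xy(5) de(2) unfolding b_def by simp
    then have "(a,b) \<in> ?FE" using a b db xy unfolding factor_pairs_def by auto
    moreover have "\<Phi> (a,b) = z" using xy(1) a(2) b(2) coord_act[OF xyM(1) xy(6)] unfolding \<Phi>_def a_def by simp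
    ultimately show "z \<in> \<Phi> ` ?FE" by force
  qed
  have "bij_betw \<Phi> ?FE ?Sig" unfolding bij_betw_def using inj into onto by blast
  thus ?thesis unfolding eqpoll_def by blast
qed

end


lemma iso_eqpoll: "h \<in> module_iso R M N \<Longrightarrow> carrier M \<approx> carrier N"
  unfolding module_iso_def eqpoll_def by blast

theorem proposition5p2:
  fixes C :: "('o, 'm) cat" and E :: "('o, 'e) cat"
    and R :: "('k, 'c) ring_scheme"
    and DM :: "'m \<Rightarrow> ('k, 'v) module" and DMap :: "'m \<Rightarrow> 'm \<Rightarrow> 'm \<Rightarrow> 'v \<Rightarrow> 'v"
    and q :: "'e \<Rightarrow> 'm" and act :: "'m \<Rightarrow> 'v \<Rightarrow> 'e \<Rightarrow> 'e"
    and S :: "'m set set"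
  assumes ext: "linear_extension C R DM DMap E q act"
    and qs: "quasi_schemoid C S"
    and lower_inv: "\<And>f g. f \<in> Mor C \<Longrightarrow> g \<in> Mor C \<Longrightarrow> Dom C f = Cod C g \<Longrightarrow>
        lower_star C DMap f g \<in> module_iso R (DM g) (DM (Comp C f g))"
    and upper_inv: "\<And>f h. f \<in> Mor C \<Longrightarrow> h \<in> Mor C \<Longrightarrow> Dom C h = Cod C f \<Longrightarrow>
        upper_star C DMap f h \<in> module_iso R (DM h) (DM (Comp C h f))"
    and block_iso: "\<And>\<sigma> f g. \<sigma> \<in> S \<Longrightarrow> f \<in> \<sigma> \<Longrightarrow> g \<in> \<sigma> \<Longrightarrow>
        is_module_iso R (DM (Id C (Dom C f))) (DM (Id C (Dom C g)))"
  shows "(\<exists>!S'. qs_morphism E S' C S q \<and> inj_on (induced_block_map S q) S') \<and>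
         (let T = {{e \<in> Mor E. q e \<in> \<sigma>} | \<sigma>. \<sigma> \<in> S}
          in qs_morphism E T C S q \<and> inj_on (induced_block_map S q) T)"
proof -
  interpret L: LE C E R DM DMap q act
    apply (rule LE.intro) using ext lower_inv upper_inv by auto
  have partC: "partition_on (Mor C) S" using qs unfolding quasi_schemoid_def by blast
  have qsC: "\<And>\<sigma> \<tau> \<mu> f g. \<sigma> \<in> S \<Longrightarrow> \<tau> \<in> S \<Longrightarrow> \<mu> \<in> S \<Longrightarrow> f \<in> \<mu> \<Longrightarrow> g \<in> \<mu> \<Longrightarrow>
        factor_pairs C \<sigma> \<tau> f \<approx> factor_pairs C \<sigma> \<tau> g"
    using qs unfolding quasi_schemoid_def by blast
  have Ssub: "\<And>\<sigma>. \<sigma> \<in> S \<Longrightarrow> \<sigma> \<subseteq> Mor C" using partC unfolding partition_on_def by blast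
  have UnS: "\<Union>S = Mor C" using partC unfolding partition_on_def by blast
  have Sne: "\<And>\<sigma>. \<sigma> \<in> S \<Longrightarrow> \<sigma> \<noteq> {}" using partC unfolding partition_on_def by blast
  have pre_ne: "{e \<in> Mor E. q e \<in> \<sigma>} \<noteq> {}" if ss: "\<sigma> \<in> S" for \<sigma>
  proof -
    obtain f where f: "f \<in> \<sigma>" using Sne[OF ss] by blast
    have "f \<in> Mor C" using f Ssub[OF ss] by blast
    then have "L.lift f \<in> {e \<in> Mor E. q e \<in> \<sigma>}" using L.lift f by auto
    thus ?thesis by blast
  qed
  have ind: "induced_block_map S q \<tau> = \<sigma>" if hh: "\<sigma> \<in> S" "\<tau> \<noteq> {}" "q ` \<tau> \<subseteq> \<sigma>" for \<tau> \<sigma>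
    unfolding induced_block_map_def
  proof (rule the_equality)
    show "\<sigma> \<in> S \<and> q ` \<tau> \<subseteq> \<sigma>" using hh by blast
    fix \<sigma>' assume a: "\<sigma>' \<in> S \<and> q ` \<tau> \<subseteq> \<sigma>'"
    obtain x where "x \<in> \<tau>" using hh(2) by blast
    then have "q x \<in> \<sigma>" "q x \<in> \<sigma>'" using a hh by auto
    thus "\<sigma>' = \<sigma>" using part_unique[OF partC] a hh(1) by blast
  qed
  define T where "T = {{e \<in> Mor E. q e \<in> \<sigma>} | \<sigma>. \<sigma> \<in> S}"
  have partT: "partition_on (Mor E) T"
    unfolding partition_on_def
  proof (intro conjI)
    show "\<Union>T = Mor E"
    proof
      show "\<Union>T \<subseteq> Mor E" unfolding T_def by blast
      show "Mor E \<subseteq> \<Union>T"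
      proof
        fix e assume e: "e \<in> Mor E"
        then have "q e \<in> \<Union>S" using L.qMor UnS by blast
        then obtain \<sigma> where "\<sigma> \<in> S" "q e \<in> \<sigma>" by blast
        thus "e \<in> \<Union>T" unfolding T_def using e by blast
      qed
    qed
    show "disjoint T" unfolding disjoint_def
    proof (intro ballI impI)
      fix A B assume A: "A \<in> T" and B: "B \<in> T" and ne: "A \<noteq> B"
      obtain \<sigma> where s: "\<sigma> \<in> S" "A = {e \<in> Mor E. q e \<in> \<sigma>}" using A unfolding T_def by blast
      obtain \<sigma>' where s': "\<sigma>' \<in> S" "B = {e \<in> Mor E. q e \<in> \<sigma>'}" using B unfolding T_def by blast
      show "A \<inter> B = {}"
      proof (rule ccontr)
        assume "A \<inter> B \<noteq> {}"
        then obtain x where "x \<in> A" "x \<in> B" by blast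
        then have "q x \<in> \<sigma>" "q x \<in> \<sigma>'" using s s' by auto
        then have "\<sigma> = \<sigma>'" using part_unique[OF partC s(1) s'(1)] by blast
        thus False using ne s s' by simp
      qed
    qed
    show "{} \<notin> T" unfolding T_def using pre_ne by force
  qed
  have blockB: "carrier (DM x) \<approx> carrier (DM x')" if bb: "\<sigma> \<in> S" "x \<in> \<sigma>" "x' \<in> \<sigma>" for \<sigma> x x'
  proof -
    have idl: "carrier (DM (Id C (Dom C y))) \<approx> carrier (DM y)" if "y \<in> Mor C" for y
    proof -
      have "Dom C y \<in> Obj C" using L.catC that unfolding is_category_def by blast
      then have i: "Id C (Dom C y) \<in> Mor C" "Cod C (Id C (Dom C y)) = Dom C y"
        using L.catC unfolding is_category_def by blast+
      have c: "Comp C y (Id C (Dom C y)) = y" using L.catC that unfolding is_category_def by blast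
      show ?thesis using iso_eqpoll[OF lower_inv[OF that i(1) i(2)[symmetric]]] c by simp
    qed
    have xM: "x \<in> Mor C" "x' \<in> Mor C" using bb Ssub by auto
    obtain h where "h \<in> module_iso R (DM (Id C (Dom C x))) (DM (Id C (Dom C x')))"
      using block_iso[OF bb] unfolding is_module_iso_def by blast
    then have m: "carrier (DM (Id C (Dom C x))) \<approx> carrier (DM (Id C (Dom C x')))" by (rule iso_eqpoll)
    have "carrier (DM x) \<approx> carrier (DM (Id C (Dom C x)))" using idl[OF xM(1)] by (rule eqpoll_sym)
    also note m
    also note idl[OF xM(2)]
    finally show ?thesis .
  qed
  have qsE: "quasi_schemoid E T"
    unfolding quasi_schemoid_def
  proof (intro conjI ballI)
    show "is_category E" by (rule L.catE)
    show "partition_on (Mor E) T" by (rule partT)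
    fix A B M f g assume A: "A \<in> T" and B: "B \<in> T" and M: "M \<in> T" and f: "f \<in> M" and g: "g \<in> M"
    obtain \<sigma> where s: "\<sigma> \<in> S" "A = {e \<in> Mor E. q e \<in> \<sigma>}" using A unfolding T_def by blast
    obtain \<tau> where t: "\<tau> \<in> S" "B = {e \<in> Mor E. q e \<in> \<tau>}" using B unfolding T_def by blast
    obtain \<mu> where m: "\<mu> \<in> S" "M = {e \<in> Mor E. q e \<in> \<mu>}" using M unfolding T_def by blast
    have fg: "f \<in> Mor E" "q f \<in> \<mu>" "g \<in> Mor E" "q g \<in> \<mu>" using f g m by auto
    have 1: "factor_pairs E A B f \<approx> Sigma (factor_pairs C \<sigma> \<tau> (q f)) (\<lambda>p. carrier (DM (fst p)))"
      unfolding s(2) t(2) by (rule L.fibre_eqpoll[OF fg(1) Ssub[OF s(1)] Ssub[OF t(1)]])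
    have 3: "factor_pairs E A B g \<approx> Sigma (factor_pairs C \<sigma> \<tau> (q g)) (\<lambda>p. carrier (DM (fst p)))"
      unfolding s(2) t(2) by (rule L.fibre_eqpoll[OF fg(3) Ssub[OF s(1)] Ssub[OF t(1)]])
    obtain h where h: "bij_betw h (factor_pairs C \<sigma> \<tau> (q f)) (factor_pairs C \<sigma> \<tau> (q g))"
      using qsC[OF s(1) t(1) m(1) fg(2) fg(4)] unfolding eqpoll_def by blast
    have 2: "Sigma (factor_pairs C \<sigma> \<tau> (q f)) (\<lambda>p. carrier (DM (fst p)))
        \<approx> Sigma (factor_pairs C \<sigma> \<tau> (q g)) (\<lambda>p. carrier (DM (fst p)))"
    proof (rule Sigma_eqpoll_cong[OF h])
      fix p assume p: "p \<in> factor_pairs C \<sigma> \<tau> (q f)"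
      then have hp: "h p \<in> factor_pairs C \<sigma> \<tau> (q g)" using h unfolding bij_betw_def by blast
      have "fst p \<in> \<sigma>" "fst (h p) \<in> \<sigma>" using p hp unfolding factor_pairs_def by auto
      thus "carrier (DM (fst p)) \<approx> carrier (DM (fst (h p)))" using blockB[OF s(1)] by blast
    qed
    show "factor_pairs E A B f \<approx> factor_pairs E A B g"
      using eqpoll_trans[OF eqpoll_trans[OF 1 2] eqpoll_sym[OF 3]] .
  qed
  have F: "id_on_obj_functor E C q" by (rule L.F)
  have img: "\<forall>\<tau>\<in>T. \<exists>\<sigma>\<in>S. q ` \<tau> \<subseteq> \<sigma>" unfolding T_def by blast
  have morT: "qs_morphism E T C S q" unfolding qs_morphism_def using qsE qs F img by blast
  have indT: "induced_block_map S q {e \<in> Mor E. q e \<in> \<sigma>} = \<sigma>" if "\<sigma> \<in> S" for \<sigma>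
    using ind[OF that pre_ne[OF that]] by blast
  have injT: "inj_on (induced_block_map S q) T"
  proof (rule inj_onI)
    fix A B assume A: "A \<in> T" and B: "B \<in> T" and eq: "induced_block_map S q A = induced_block_map S q B"
    obtain \<sigma> where s: "\<sigma> \<in> S" "A = {e \<in> Mor E. q e \<in> \<sigma>}" using A unfolding T_def by blast
    obtain \<sigma>' where s': "\<sigma>' \<in> S" "B = {e \<in> Mor E. q e \<in> \<sigma>'}" using B unfolding T_def by blast
    have "\<sigma> = \<sigma>'" using eq indT[OF s(1)] indT[OF s'(1)] s s' by simp
    thus "A = B" using s s' by simp
  qed
  have uniq: "S' = T" if S': "qs_morphism E S' C S q" "inj_on (induced_block_map S q) S'" for S'
  proof -
    have partS': "partition_on (Mor E) S'" using S'(1) unfolding qs_morphism_def quasi_schemoid_def by blast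
    have mapS': "\<And>\<tau>. \<tau> \<in> S' \<Longrightarrow> \<exists>\<sigma>\<in>S. q ` \<tau> \<subseteq> \<sigma>" using S'(1) unfolding qs_morphism_def by blast
    have UnS': "\<Union>S' = Mor E" and neS': "{} \<notin> S'" using partS' unfolding partition_on_def by blast+
    have c1: "\<exists>\<sigma>\<in>S. \<tau> = {e \<in> Mor E. q e \<in> \<sigma>}" if t: "\<tau> \<in> S'" for \<tau>
    proof -
      obtain \<sigma> where s: "\<sigma> \<in> S" "q ` \<tau> \<subseteq> \<sigma>" using mapS'[OF t] by blast
      have tne: "\<tau> \<noteq> {}" using neS' t by blast
      have "\<tau> = {e \<in> Mor E. q e \<in> \<sigma>}"
      proof
        show "\<tau> \<subseteq> {e \<in> Mor E. q e \<in> \<sigma>}" using t UnS' s(2) by blast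
        show "{e \<in> Mor E. q e \<in> \<sigma>} \<subseteq> \<tau>"
        proof
          fix e assume e: "e \<in> {e \<in> Mor E. q e \<in> \<sigma>}"
          then obtain \<tau>' where t': "\<tau>' \<in> S'" "e \<in> \<tau>'" using UnS' by blast
          obtain \<sigma>' where s': "\<sigma>' \<in> S" "q ` \<tau>' \<subseteq> \<sigma>'" using mapS'[OF t'(1)] by blast
          have "q e \<in> \<sigma>" "q e \<in> \<sigma>'" using e t' s' by auto
          then have ss: "\<sigma>' = \<sigma>" using part_unique[OF partC s'(1) s(1)] by blast
          have t'ne: "\<tau>' \<noteq> {}" using t' by blast
          have "induced_block_map S q \<tau>' = \<sigma>" using ind[OF s(1) t'ne] s'(2) ss by blast
          moreover have "induced_block_map S q \<tau> = \<sigma>" using ind[OF s(1) tne s(2)] .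
          ultimately have "\<tau>' = \<tau>" using inj_onD[OF S'(2) _ t'(1) t] by simp
          thus "e \<in> \<tau>" using t' by blast
        qed
      qed
      thus ?thesis using s(1) by blast
    qed
    have c2: "{e \<in> Mor E. q e \<in> \<sigma>} \<in> S'" if s: "\<sigma> \<in> S" for \<sigma>
    proof -
      obtain e where e: "e \<in> {e \<in> Mor E. q e \<in> \<sigma>}" using pre_ne[OF s] by blast
      then obtain \<tau> where t: "\<tau> \<in> S'" "e \<in> \<tau>" using UnS' by blast
      obtain \<sigma>' where s': "\<sigma>' \<in> S" "\<tau> = {e \<in> Mor E. q e \<in> \<sigma>'}" using c1[OF t(1)] by blast
      have "q e \<in> \<sigma>" "q e \<in> \<sigma>'" using e t s' by auto
      then have "\<sigma>' = \<sigma>" using part_unique[OF partC s'(1) s] by blast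
      thus ?thesis using t s' by simp
    qed
    show "S' = T"
    proof
      show "S' \<subseteq> T" unfolding T_def using c1 by blast
      show "T \<subseteq> S'" unfolding T_def using c2 by blast
    qed
  qed
  have ex: "\<exists>!S'. qs_morphism E S' C S q \<and> inj_on (induced_block_map S q) S'"
    using morT injT uniq by blast
  show ?thesis unfolding Let_def using ex morT injT unfolding T_def by blast
qed

end
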